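(* Let $N$ be a finite set and $\mathcal{F} \subseteq 2^N$ a set family. If $\mathcal{F}$ satisfies (B$^\natural$-EXC$_{\rm m}$), then $\mathcal{F}$ satisfies (B$^\natural$-EXC$_{\pm}$).
   Context: Notation: $X - i = X \setminus \{i\}$, $Y + i = Y \cup \{i\}$, $X - i + j = (X\setminus\{i\})\cup\{j\}$, $Y + i - k = (Y \cup\{i\})\setminus\{k\}$. (B$^\natural$-EXC$_{\rm m}$): for any $X, Y \in \mathcal{F}$ and $I \subseteq X\setminus Y$ there exists $J \subseteq Y\setminus X$ with $(X\setminus I)\cup J \in \mathcal{F}$ and $(Y\setminus J)\cup I \in \mathcal{F}$. (B$^\natural$-EXC$_{\pm}$): for any $X, Y \in \mathcal{F}$ and $i \in X\setminus Y$, both (a) and (b) hold, where (a): $X - i \in \mathcal{F}$, or $X - i + j \in \mathcal{F}$ for some $j \in Y\setminus X$; (b): $Y + i \in \mathcal{F}$, or $Y + i - k \in \mathcal{F}$ for some $k \in Y\setminus X$. *)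

theory Defs
  imports Main
begin

definition exc_m :: "'a set set \<Rightarrow> bool" where
  "exc_m F \<longleftrightarrow> (\<forall>X\<in>F. \<forall>Y\<in>F. \<forall>I. I \<subseteq> X - Y \<longrightarrow>
      (\<exists>J. J \<subseteq> Y - X \<and> (X - I) \<union> J \<in> F \<and> (Y - J) \<union> I \<in> F))"

definition exc_pm :: "'a set set \<Rightarrow> bool" where
  "exc_pm F \<longleftrightarrow> (\<forall>X\<in>F. \<forall>Y\<in>F. \<forall>i\<in>X - Y.
      (X - {i} \<in> F \<or> (\<exists>j\<in>Y - X. insert j (X - {i}) \<in> F)) \<and>
      (insert i Y \<in> F \<or> (\<exists>k\<in>Y - X. (insert i Y) - {k} \<in> F)))"

end

theory Submission
  imports Defs
begin

lemma exc_mD: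
  assumes "exc_m F" "X \<in> F" "Y \<in> F" "I \<subseteq> X - Y"
  obtains J where "J \<subseteq> Y - X" "(X - I) \<union> J \<in> F" "(Y - J) \<union> I \<in> F"
proof -
  have "\<forall>X\<in>F. \<forall>Y\<in>F. \<forall>I. I \<subseteq> X - Y \<longrightarrow>
      (\<exists>J. J \<subseteq> Y - X \<and> (X - I) \<union> J \<in> F \<and> (Y - J) \<union> I \<in> F)"
    using assms(1) unfolding exc_m_def .
  then have "\<exists>J. J \<subseteq> Y - X \<and> (X - I) \<union> J \<in> F \<and> (Y - J) \<union> I \<in> F"
    using assms(2,3,4) by simp
  then show ?thesis using that by blast
qed

lemma partA:
  assumes fin: "finite J" and m: "exc_m F" and XF: "X \<in> F"
    and iX: "i \<in> X" and JX: "J \<inter> X = {}" and JY: "J \<subseteq> Y - X"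
    and XJ: "(X - {i}) \<union> J \<in> F"
  shows "X - {i} \<in> F \<or> (\<exists>j\<in>Y - X. insert j (X - {i}) \<in> F)"
  using fin JX JY XJ
proof (induction J rule: finite_psubset_induct)
  case (psubset J)
  show ?case
  proof (cases "J = {}")
    case True then show ?thesis using psubset.prems by simp
  next
    case False
    then obtain j where j: "j \<in> J" by blast
    let ?X' = "(X - {i}) \<union> J"
    have "J - {j} \<subseteq> ?X' - X" using psubset.prems by auto
    then obtain J' where J': "J' \<subseteq> X - ?X'" "(?X' - (J - {j})) \<union> J' \<in> F"
        "(X - J') \<union> (J - {j}) \<in> F"
      using exc_mD[OF m psubset.prems(3) XF] by blast
    have "X - ?X' = {i}" using psubset.prems iX by auto
    then have "J' = {} \<or> J' = {i}" using J' by auto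
    then show ?thesis
    proof
      assume "J' = {}"
      moreover have "(?X' - (J - {j})) \<union> J' = insert j (X - {i})"
        using psubset.prems j `J' = {}` by auto
      ultimately have "insert j (X - {i}) \<in> F" using J'(2) by simp
      then show ?thesis using j psubset.prems by blast
    next
      assume "J' = {i}"
      then have a: "(X - {i}) \<union> (J - {j}) \<in> F" using J'(3) by simp
      have b: "J - {j} \<subset> J" using j by auto
      have c: "(J - {j}) \<inter> X = {}" "J - {j} \<subseteq> Y - X" using psubset.prems by auto
      show ?thesis by (rule psubset.IH[OF b c a])
    qed
  qed
qed

lemma partB:
  assumes fin: "finite J" and m: "exc_m F" and YF: "Y \<in> F"
    and iY: "i \<notin> Y" and JY: "J \<subseteq> Y - X"
    and YJ: "insert i (Y - J) \<in> F"
  shows "insert i Y \<in> F \<or> (\<exists>k\<in>Y - X. (insert i Y) - {k} \<in> F)"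
  using fin JY YJ
proof (induction J rule: finite_psubset_induct)
  case (psubset J)
  show ?case
  proof (cases "J = {}")
    case True then show ?thesis using psubset.prems by simp
  next
    case False
    then obtain j where j: "j \<in> J" by blast
    let ?Y' = "insert i (Y - J)"
    have "J - {j} \<subseteq> Y - ?Y'" using psubset.prems iY by auto
    then obtain J' where J': "J' \<subseteq> ?Y' - Y" "(Y - (J - {j})) \<union> J' \<in> F"
        "(?Y' - J') \<union> (J - {j}) \<in> F"
      using exc_mD[OF m YF psubset.prems(2)] by blast
    have "?Y' - Y = {i}" using psubset.prems iY by auto
    then have "J' = {} \<or> J' = {i}" using J' by auto
    then show ?thesis
    proof
      assume "J' = {}"
      moreover have "(?Y' - {}) \<union> (J - {j}) = (insert i Y) - {j}"
        using psubset.prems j iY by auto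
      ultimately have "(insert i Y) - {j} \<in> F" using J'(3) by simp
      then show ?thesis using j psubset.prems by blast
    next
      assume "J' = {i}"
      moreover have "(Y - (J - {j})) \<union> {i} = insert i (Y - (J - {j}))" by auto
      ultimately have a: "insert i (Y - (J - {j})) \<in> F" using J'(2) by simp
      have b: "J - {j} \<subset> J" using j by auto
      have c: "J - {j} \<subseteq> Y - X" using psubset.prems by auto
      show ?thesis by (rule psubset.IH[OF b c a])
    qed
  qed
qed

theorem proposition5:
  fixes N :: "'a set" and F :: "'a set set"
  assumes "finite N" and "F \<subseteq> Pow N"
  assumes "exc_m F"
  shows "exc_pm F"
  unfolding exc_pm_def
proof (intro ballI conjI)
  fix X Y i assume XF: "X \<in> F" and YF: "Y \<in> F" and i: "i \<in> X - Y"
  obtain J where J: "J \<subseteq> Y - X" "(X - {i}) \<union> J \<in> F" "(Y - J) \<union> {i} \<in> F"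
  proof -
    have "{i} \<subseteq> X - Y" using i by simp
    then show ?thesis using that exc_mD[OF assms(3) XF YF] by blast
  qed
  have finY: "finite Y" using YF assms(1,2) by (meson PowD finite_subset subsetD)
  have fJ: "finite J" using J(1) finY by (meson Diff_subset finite_subset subset_trans)
  show "X - {i} \<in> F \<or> (\<exists>j\<in>Y - X. insert j (X - {i}) \<in> F)"
    using partA[OF fJ assms(3) XF _ _ J(1) J(2)] i J(1) by blast
  have "insert i (Y - J) \<in> F" using J(3) by simp
  then show "insert i Y \<in> F \<or> (\<exists>k\<in>Y - X. (insert i Y) - {k} \<in> F)"
    using partB[OF fJ assms(3) YF _ J(1)] i by blast
qed

end
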